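(* Let $I=((x_1x_2)^{\omega_1},x_2x_3,x_3x_4)\subseteq S=\mathbb{K}[x_1,x_2,x_3,x_4]$ with $\omega_1\ge2$ (the edge ideal of the weighted path $x_1-x_2-x_3-x_4$ with weights $\omega_1,1,1$). Then $\operatorname{depth}(S/I^t)\ge1$ for every $t\ge2$.
   Context: $\mathbb{K}$ is a field; $\operatorname{depth}$ is the depth of a graded $S$-module. *)

theory Defs
  imports "HOL-Library.Poly_Mapping" "HOL-Library.Extended_Nat"
begin

datatype var = X1 | X2 | X3 | X4

text \<open>Polynomials over 'k in the variables x1..x4: finitely supported maps
  from monomials (exponent vectors var \<Rightarrow>0 nat) to coefficients.\<close>
type_synonym 'k poly4 = "(var \<Rightarrow>\<^sub>0 nat) \<Rightarrow>\<^sub>0 'k"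

definition Var :: "var \<Rightarrow> 'k::comm_ring_1 poly4" where
  "Var v = Poly_Mapping.single (Poly_Mapping.single v 1) 1"

definition gen_ideal :: "'a::comm_ring_1 set \<Rightarrow> 'a set" where
  "gen_ideal G = {p. \<exists>F c. finite F \<and> F \<subseteq> G \<and> p = (\<Sum>g\<in>F. c g * g)}"

definition ideal_prod :: "'a::comm_ring_1 set \<Rightarrow> 'a set \<Rightarrow> 'a set" where
  "ideal_prod I J = gen_ideal {a * b | a b. a \<in> I \<and> b \<in> J}"

fun ideal_pow :: "'a::comm_ring_1 set \<Rightarrow> nat \<Rightarrow> 'a set" where
  "ideal_pow I 0 = UNIV"
| "ideal_pow I (Suc n) = ideal_prod I (ideal_pow I n)"

definition max_ideal :: "'k::comm_ring_1 poly4 set" where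
  "max_ideal = gen_ideal (range Var)"

text \<open>A sequence fs = [f1,...,fr] of elements of m is a regular sequence on
  the module M = S/J if each f_i is a nonzerodivisor on M/(f1,...,f_{i-1})M
  and M/(f1,...,fr)M \<noteq> 0.  Note (f1..f_{i-1})(S/J) = (J + (f1..f_{i-1}))/J.\<close>
definition regular_seq :: "'k::field poly4 set \<Rightarrow> 'k poly4 list \<Rightarrow> bool" where
  "regular_seq J fs \<longleftrightarrow>
     set fs \<subseteq> max_ideal \<and>
     (\<forall>i < length fs. \<forall>g. fs ! i * g \<in> gen_ideal (J \<union> set (take i fs))
                           \<longrightarrow> g \<in> gen_ideal (J \<union> set (take i fs))) \<and>
     gen_ideal (J \<union> set fs) \<noteq> UNIV"

definition depth_quot :: "'k::field poly4 set \<Rightarrow> enat" where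
  "depth_quot J = Sup {enat (length fs) | fs. regular_seq J fs}"

end

theory Submission
  imports Defs
begin

lemma gen_base: "g \<in> G \<Longrightarrow> g \<in> gen_ideal G"
  unfolding gen_ideal_def by (rule CollectI, rule exI[of _ "{g}"], rule exI[of _ "\<lambda>_. 1"]) simp

lemma gen_zero: "0 \<in> gen_ideal G"
  unfolding gen_ideal_def by (rule CollectI, rule exI[of _ "{}"]) simp

lemma gen_add:
  assumes "p \<in> gen_ideal G" "q \<in> gen_ideal G" shows "p + q \<in> gen_ideal G"
proof -
  obtain F1 c1 where 1: "finite F1" "F1 \<subseteq> G" "p = (\<Sum>g\<in>F1. c1 g * g)"
    using assms(1) unfolding gen_ideal_def by blast
  obtain F2 c2 where 2: "finite F2" "F2 \<subseteq> G" "q = (\<Sum>g\<in>F2. c2 g * g)"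
    using assms(2) unfolding gen_ideal_def by blast
  define c where "c g = (if g \<in> F1 then c1 g else 0) + (if g \<in> F2 then c2 g else 0)" for g
  have a: "p = (\<Sum>g\<in>F1 \<union> F2. (if g \<in> F1 then c1 g else 0) * g)"
    unfolding 1(3) by (rule sum.mono_neutral_cong_right[symmetric]) (use 1 2 in auto)
  have b: "q = (\<Sum>g\<in>F1 \<union> F2. (if g \<in> F2 then c2 g else 0) * g)"
    unfolding 2(3) by (rule sum.mono_neutral_cong_right[symmetric]) (use 1 2 in auto)
  have "p + q = (\<Sum>g\<in>F1 \<union> F2. c g * g)"
    unfolding a b c_def by (simp add: sum.distrib distrib_right)
  moreover have "finite (F1 \<union> F2)" "F1 \<union> F2 \<subseteq> G" using 1 2 by auto
  ultimately show ?thesis unfolding gen_ideal_def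
    by (intro CollectI exI[where x="F1 \<union> F2"] exI[where x=c]) simp
qed

lemma gen_mult:
  assumes "p \<in> gen_ideal G" shows "r * p \<in> gen_ideal G"
proof -
  obtain F c where 1: "finite F" "F \<subseteq> G" "p = (\<Sum>g\<in>F. c g * g)"
    using assms unfolding gen_ideal_def by blast
  have "r * p = (\<Sum>g\<in>F. (r * c g) * g)"
    unfolding 1 by (simp add: sum_distrib_left mult.assoc)
  with 1(1,2) show ?thesis unfolding gen_ideal_def
    by (intro CollectI exI[where x=F] exI[where x="\<lambda>g. r * c g"]) simp
qed

lemma gen_sum: "finite A \<Longrightarrow> (\<And>x. x \<in> A \<Longrightarrow> f x \<in> gen_ideal G) \<Longrightarrow> sum f A \<in> gen_ideal G"
  by (induction A rule: finite_induct) (auto intro: gen_zero gen_add)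

lemma gen_least:
  assumes "0 \<in> J" "\<And>p q. p \<in> J \<Longrightarrow> q \<in> J \<Longrightarrow> p + q \<in> J"
    "\<And>p r. p \<in> J \<Longrightarrow> r * p \<in> J" "G \<subseteq> J"
  shows "gen_ideal G \<subseteq> J"
proof
  fix p assume "p \<in> gen_ideal G"
  then obtain F c where 1: "finite F" "F \<subseteq> G" "p = (\<Sum>g\<in>F. c g * g)"
    unfolding gen_ideal_def by blast
  have "(\<Sum>g\<in>F. c g * g) \<in> J" using 1(1,2)
    by (induction F rule: finite_induct) (use assms in auto)
  thus "p \<in> J" using 1 by simp
qed

lemma gen_sub: "G \<subseteq> gen_ideal H \<Longrightarrow> gen_ideal G \<subseteq> gen_ideal H"
  by (rule gen_least) (auto intro: gen_zero gen_add gen_mult)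


section \<open>Monomial ideals\<close>

type_synonym mon = "var \<Rightarrow>\<^sub>0 nat"

definition KK :: "mon set \<Rightarrow> 'k::comm_ring_1 poly4 set" where
  "KK U = {p. Poly_Mapping.keys p \<subseteq> U}"

definition upcl :: "mon set \<Rightarrow> bool" where
  "upcl U \<longleftrightarrow> (\<forall>m\<in>U. \<forall>k. m + k \<in> U)"

lemma KK_zero: "0 \<in> KK U" unfolding KK_def by simp

lemma KK_add: "p \<in> KK U \<Longrightarrow> q \<in> KK U \<Longrightarrow> p + q \<in> KK U"
  unfolding KK_def using keys_add[of p q] by auto

lemma KK_mult: assumes "upcl U" "p \<in> KK U" shows "r * p \<in> KK U"
proof -
  have "Poly_Mapping.keys (r * p) \<subseteq> {a + b | a b. a \<in> Poly_Mapping.keys r \<and> b \<in> Poly_Mapping.keys p}" by (rule keys_mult)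
  also have "\<dots> \<subseteq> U" using assms unfolding KK_def upcl_def by (auto, metis add.commute subsetD)
  finally show ?thesis unfolding KK_def by simp
qed

lemma gen_KK: "upcl U \<Longrightarrow> G \<subseteq> KK U \<Longrightarrow> gen_ideal G \<subseteq> KK U"
  by (rule gen_least) (auto intro: KK_zero KK_add KK_mult)

lemma gen_KK_self: "upcl U \<Longrightarrow> gen_ideal (KK U) = KK U"
  using gen_KK[of U "KK U"] gen_base[of _ "KK U"] by blast

definition mn :: "mon \<Rightarrow> 'k::comm_ring_1 poly4" where
  "mn e = Poly_Mapping.single e 1"

definition up :: "mon set \<Rightarrow> mon set" where
  "up E = {m. \<exists>e\<in>E. \<exists>k. m = e + k}"

lemma upcl_up: "upcl (up E)"
  unfolding upcl_def up_def by (auto, metis add.assoc)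

lemma mono_mult: "mn a * mn b = mn (a + b)"
  unfolding mn_def by (simp add: mult_single)

lemma poly_expand: "p = (\<Sum>m\<in>Poly_Mapping.keys p. Poly_Mapping.single m (Poly_Mapping.lookup p m))"
proof (rule poly_mapping_eqI)
  fix k
  show "Poly_Mapping.lookup p k = Poly_Mapping.lookup (\<Sum>m\<in>Poly_Mapping.keys p. Poly_Mapping.single m (Poly_Mapping.lookup p m)) k"
  proof (cases "k \<in> Poly_Mapping.keys p")
    case True
    then show ?thesis
      by (simp add: lookup_sum lookup_single when_def sum.delta)
  next
    case False
    then show ?thesis
      by (simp add: lookup_sum lookup_single when_def in_keys_iff)
  qed
qed

lemma gen_mono: "gen_ideal (mn ` E) = (KK (up E) :: 'k::comm_ring_1 poly4 set)"
proof
  show "gen_ideal (mn ` E) \<subseteq> (KK (up E) :: 'k poly4 set)"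
    by (rule gen_KK[OF upcl_up]) (auto simp: KK_def mn_def up_def, metis add.right_neutral)
next
  show "(KK (up E) :: 'k poly4 set) \<subseteq> gen_ideal (mn ` E)"
  proof
    fix p :: "'k poly4" assume p: "p \<in> KK (up E)"
    have "(\<Sum>m\<in>Poly_Mapping.keys p. Poly_Mapping.single m (Poly_Mapping.lookup p m)) \<in> gen_ideal (mn ` E)"
    proof (rule gen_sum)
      fix m assume "m \<in> Poly_Mapping.keys p"
      then obtain e k where e: "e \<in> E" "m = e + k" using p unfolding KK_def up_def by blast
      have "Poly_Mapping.single m (Poly_Mapping.lookup p m) = Poly_Mapping.single k (Poly_Mapping.lookup p m) * mn e"
        unfolding mn_def e(2) by (simp add: mult_single add.commute)
      also have "\<dots> \<in> gen_ideal (mn ` E)" by (rule gen_mult, rule gen_base) (use e in auto)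
      finally show "Poly_Mapping.single m (Poly_Mapping.lookup p m) \<in> gen_ideal (mn ` E)" .
    qed simp
    thus "p \<in> gen_ideal (mn ` E)" using poly_expand[of p] by simp
  qed
qed

definition psum :: "mon set \<Rightarrow> mon set \<Rightarrow> mon set" where
  "psum X Y = {x + y | x y. x \<in> X \<and> y \<in> Y}"

lemma prod_KK: "ideal_prod (KK (up X)) (KK (up Y)) = (KK (up (psum X Y)) :: 'k::comm_ring_1 poly4 set)"
proof
  show "ideal_prod (KK (up X)) (KK (up Y)) \<subseteq> (KK (up (psum X Y)) :: 'k poly4 set)"
    unfolding ideal_prod_def
  proof (rule gen_KK[OF upcl_up], safe)
    fix a b :: "'k poly4" assume a: "a \<in> KK (up X)" and b: "b \<in> KK (up Y)"
    have "Poly_Mapping.keys (a * b) \<subseteq> {u + v | u v. u \<in> Poly_Mapping.keys a \<and> v \<in> Poly_Mapping.keys b}" by (rule keys_mult)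
    also have "\<dots> \<subseteq> up (psum X Y)"
    proof safe
      fix u v assume "u \<in> Poly_Mapping.keys a" "v \<in> Poly_Mapping.keys b"
      then obtain x k y l where xy: "x \<in> X" "u = x + k" "y \<in> Y" "v = y + l"
        using a b unfolding KK_def up_def by blast
      then have "u + v = (x + y) + (k + l)" by (simp add: add_ac)
      moreover have "x + y \<in> psum X Y" using xy unfolding psum_def by blast
      ultimately show "u + v \<in> up (psum X Y)" unfolding up_def by blast
    qed
    finally show "a * b \<in> KK (up (psum X Y))" unfolding KK_def by simp
  qed
next
  have "(KK (up (psum X Y)) :: 'k poly4 set) = gen_ideal (mn ` psum X Y)" by (rule gen_mono[symmetric])
  also have "\<dots> \<subseteq> ideal_prod (KK (up X)) (KK (up Y))"
    unfolding ideal_prod_def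
  proof (rule gen_sub, rule subsetI, rule gen_base)
    fix z :: "'k poly4" assume "z \<in> mn ` psum X Y"
    then obtain x y where xy: "x \<in> X" "y \<in> Y" "z = mn (x + y)" unfolding psum_def by blast
    have "mn x \<in> (KK (up X) :: 'k poly4 set)" using xy unfolding KK_def up_def mn_def
      by (auto, metis add.right_neutral)
    moreover have "mn y \<in> (KK (up Y) :: 'k poly4 set)" using xy unfolding KK_def up_def mn_def
      by (auto, metis add.right_neutral)
    moreover have "z = mn x * mn y" by (simp add: xy mono_mult)
    ultimately show "z \<in> {a * b | a b. a \<in> KK (up X) \<and> b \<in> KK (up Y)}"
      by blast
  qed
  finally show "(KK (up (psum X Y)) :: 'k poly4 set) \<subseteq> ideal_prod (KK (up X)) (KK (up Y))" .
qed


definition mk :: "nat \<Rightarrow> nat \<Rightarrow> nat \<Rightarrow> nat \<Rightarrow> mon" where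
  "mk a b c d = Poly_Mapping.single X1 a + Poly_Mapping.single X2 b
     + Poly_Mapping.single X3 c + Poly_Mapping.single X4 d"

lemma lookup_mk [simp]:
  "Poly_Mapping.lookup (mk a b c d) X1 = a"
  "Poly_Mapping.lookup (mk a b c d) X2 = b"
  "Poly_Mapping.lookup (mk a b c d) X3 = c"
  "Poly_Mapping.lookup (mk a b c d) X4 = d"
  by (simp_all add: mk_def lookup_add lookup_single when_def)

lemma mk_add: "mk a b c d + mk a' b' c' d' = mk (a+a') (b+b') (c+c') (d+d')"
  by (simp add: mk_def single_add add_ac)

abbreviation "L m v \<equiv> Poly_Mapping.lookup m v"

lemma mk_eq: "m = mk (L m X1) (L m X2) (L m X3) (L m X4)"
proof (rule poly_mapping_eqI)
  fix v show "L m v = L (mk (L m X1) (L m X2) (L m X3) (L m X4)) v"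
    by (cases v) simp_all
qed

lemma mk_eq_iff: "mk a b c d = mk a' b' c' d' \<longleftrightarrow> a = a' \<and> b = b' \<and> c = c' \<and> d = d'"
  by (metis lookup_mk)

lemma mk_zero: "mk 0 0 0 0 = 0"
  by (simp add: mk_def)

lemma le_mk: "(\<exists>k. m = mk a b c d + k) \<longleftrightarrow>
   a \<le> L m X1 \<and> b \<le> L m X2 \<and> c \<le> L m X3 \<and> d \<le> L m X4"
proof
  assume "\<exists>k. m = mk a b c d + k"
  then obtain k where "m = mk a b c d + k" by blast
  then show "a \<le> L m X1 \<and> b \<le> L m X2 \<and> c \<le> L m X3 \<and> d \<le> L m X4"
    by (simp add: lookup_add)
next
  assume h: "a \<le> L m X1 \<and> b \<le> L m X2 \<and> c \<le> L m X3 \<and> d \<le> L m X4"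
  have "m = mk a b c d + mk (L m X1 - a) (L m X2 - b) (L m X3 - c) (L m X4 - d)"
    apply (subst mk_eq[of m]) unfolding mk_add using h by simp
  then show "\<exists>k. m = mk a b c d + k" by blast
qed

definition E1 :: "nat \<Rightarrow> mon set" where
  "E1 w = {mk w w 0 0, mk 0 1 1 0, mk 0 0 1 1}"

fun Ep :: "nat \<Rightarrow> nat \<Rightarrow> mon set" where
  "Ep w 0 = {0}"
| "Ep w (Suc n) = psum (E1 w) (Ep w n)"

lemma Ep_char: "Ep w t = {mk (w*p) (w*p+q) (q+r) r | p q r. p+q+r = t}"
proof (induction t)
  case 0
  then show ?case by (auto simp: mk_zero)
next
  case (Suc n)
  show ?case
  proof
    show "Ep w (Suc n) \<subseteq> {mk (w*p) (w*p+q) (q+r) r | p q r. p+q+r = Suc n}"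
    proof
      fix z assume "z \<in> Ep w (Suc n)"
      then obtain x p q r where x: "x \<in> E1 w" "p+q+r = n" "z = x + mk (w*p) (w*p+q) (q+r) r"
        using Suc by (auto simp: psum_def)
      from x(1) have "x = mk w w 0 0 \<or> x = mk 0 1 1 0 \<or> x = mk 0 0 1 1" unfolding E1_def by auto
      then show "z \<in> {mk (w*p) (w*p+q) (q+r) r | p q r. p+q+r = Suc n}"
      proof (elim disjE)
        assume "x = mk w w 0 0"
        then have "z = mk (w*(p+1)) (w*(p+1)+q) (q+r) r" using x by (simp add: mk_add algebra_simps)
        then show ?thesis using x(2) by (intro CollectI exI[where x="p+1"] exI[where x=q] exI[where x=r]) simp
      next
        assume "x = mk 0 1 1 0"
        then have "z = mk (w*p) (w*p+(q+1)) ((q+1)+r) r" using x by (simp add: mk_add algebra_simps)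
        then show ?thesis using x(2) by (intro CollectI exI[where x="p"] exI[where x="q+1"] exI[where x=r]) simp
      next
        assume "x = mk 0 0 1 1"
        then have "z = mk (w*p) (w*p+q) (q+(r+1)) (r+1)" using x by (simp add: mk_add algebra_simps)
        then show ?thesis using x(2) by (intro CollectI exI[where x="p"] exI[where x="q"] exI[where x="r+1"]) simp
      qed
    qed
  next
    show "{mk (w*p) (w*p+q) (q+r) r | p q r. p+q+r = Suc n} \<subseteq> Ep w (Suc n)"
    proof
      fix z assume "z \<in> {mk (w*p) (w*p+q) (q+r) r | p q r. p+q+r = Suc n}"
      then obtain p q r where z: "p+q+r = Suc n" "z = mk (w*p) (w*p+q) (q+r) r" by blast
      have "\<exists>x\<in>E1 w. \<exists>p' q' r'. p'+q'+r' = n \<and> z = x + mk (w*p') (w*p'+q') (q'+r') r'"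
      proof (cases "p > 0")
        case True
        then have "z = mk w w 0 0 + mk (w*(p-1)) (w*(p-1)+q) (q+r) r"
          using z by (cases p) (auto simp: mk_add algebra_simps)
        then show ?thesis using z True unfolding E1_def
          by (intro bexI[where x="mk w w 0 0"] exI[where x="p-1"] exI[where x=q] exI[where x=r]) auto
      next
        case False
        show ?thesis
        proof (cases "q > 0")
          case True
          then have "z = mk 0 1 1 0 + mk (w*p) (w*p+(q-1)) ((q-1)+r) r"
            using z by (cases q) (auto simp: mk_add algebra_simps)
          then show ?thesis using z True False unfolding E1_def
            by (intro bexI[where x="mk 0 1 1 0"] exI[where x="p"] exI[where x="q-1"] exI[where x=r]) auto
        next
          case False2: False
          then have r: "r = Suc n" "p = 0" "q = 0" using z False by auto
          then have "z = mk 0 0 1 1 + mk (w*p) (w*p+q) (q+n) n"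
            using z by (auto simp: mk_add algebra_simps)
          then show ?thesis using r unfolding E1_def
            by (intro bexI[where x="mk 0 0 1 1"] exI[where x="p"] exI[where x="q"] exI[where x=n]) auto
        qed
      qed
      then show "z \<in> Ep w (Suc n)" unfolding Ep.simps Suc psum_def by blast
    qed
  qed
qed

definition inU :: "nat \<Rightarrow> nat \<Rightarrow> nat \<Rightarrow> nat \<Rightarrow> nat \<Rightarrow> nat \<Rightarrow> bool" where
  "inU w t a b c d \<longleftrightarrow> (\<exists>p q r. p+q+r = t \<and> w*p \<le> a \<and> w*p+q \<le> b \<and> q+r \<le> c \<and> r \<le> d)"

definition UU :: "nat \<Rightarrow> nat \<Rightarrow> mon set" where
  "UU w t = {m. inU w t (L m X1) (L m X2) (L m X3) (L m X4)}"

lemma up_Ep: "up (Ep w t) = UU w t"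
  unfolding up_def Ep_char UU_def inU_def
  by (auto simp: le_mk[symmetric])


section \<open>The powers of I\<close>

lemma Var_mk:
  "Var X1 = mn (mk 1 0 0 0)" "Var X2 = mn (mk 0 1 0 0)"
  "Var X3 = mn (mk 0 0 1 0)" "Var X4 = mn (mk 0 0 0 1)"
  by (simp_all add: Var_def mn_def mk_def)

lemma mn_zero: "mn 0 = 1"
  by (simp add: mn_def)

lemma pow_mn: "(mn (mk 1 1 0 0) :: 'k::comm_ring_1 poly4) ^ w = mn (mk w w 0 0)"
proof (induction w)
  case 0 then show ?case by (simp add: mk_zero mn_zero)
next
  case (Suc w) then show ?case by (simp add: mono_mult mk_add)
qed

lemma gens_eq: "{(Var X1 * Var X2) ^ w, Var X2 * Var X3, Var X3 * Var X4} = (mn ` E1 w :: 'k::comm_ring_1 poly4 set)"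
  using pow_mn[of w, where 'k='k] by (simp add: E1_def Var_mk mono_mult mk_add)

lemma pow_KK:
  "ideal_pow (gen_ideal {(Var X1 * Var X2) ^ w, Var X2 * Var X3, Var X3 * Var X4} :: 'k::comm_ring_1 poly4 set) t
   = KK (UU w t)"
proof -
  have I: "gen_ideal {(Var X1 * Var X2) ^ w, Var X2 * Var X3, Var X3 * Var X4} = (KK (up (E1 w)) :: 'k poly4 set)"
    by (simp add: gens_eq gen_mono)
  have "ideal_pow (gen_ideal {(Var X1 * Var X2) ^ w, Var X2 * Var X3, Var X3 * Var X4} :: 'k poly4 set) t
     = KK (up (Ep w t))"
  proof (induction t)
    case 0
    have "up {0} = UNIV" unfolding up_def by auto
    then show ?case by (simp add: KK_def)
  next
    case (Suc t) then show ?case by (simp add: I prod_KK)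
  qed
  then show ?thesis by (simp add: up_Ep)
qed


lemma inU_mono: "inU w t a b c d \<Longrightarrow> a \<le> a' \<Longrightarrow> b \<le> b' \<Longrightarrow> c \<le> c' \<Longrightarrow> d \<le> d'
   \<Longrightarrow> inU w t a' b' c' d'"
  unfolding inU_def by (elim exE conjE, rule exI, rule exI, rule exI) (auto intro: le_trans)

lemma wle: assumes "1 \<le> (w::nat)" "p1 \<le> p2" shows "w*p1 + (p2 - p1) \<le> w*p2"
proof -
  have "w * p2 = w*p1 + w*(p2-p1)" using assms by (simp add: algebra_simps)
  moreover have "p2 - p1 \<le> w*(p2-p1)" using assms by simp
  ultimately show ?thesis by simp
qed

lemma inU_meet_aux:
  assumes w: "1 \<le> w" and o: "p1 \<le> p2"
    and 1: "p1+q1+r1 = t" "w*p1 \<le> a1" "w*p1+q1 \<le> b" "q1+r1 \<le> c" "r1 \<le> d1"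
    and 2: "p2+q2+r2 = t" "w*p2 \<le> a2" "w*p2+q2 \<le> b" "q2+r2 \<le> c" "r2 \<le> d2"
  shows "inU w t (min a1 a2) b c (min d1 d2)"
proof (cases "r1 \<le> r2")
  case True
  have "w*p1 \<le> w*p2" using o by simp
  then have "p1+q1+r1 = t \<and> w*p1 \<le> min a1 a2 \<and> w*p1+q1 \<le> b \<and> q1+r1 \<le> c \<and> r1 \<le> min d1 d2"
    using 1 2 True \<open>w*p1 \<le> w*p2\<close> by linarith
  then show ?thesis unfolding inU_def by blast
next
  case False
  have a: "w*p1 \<le> w*p2" using o by simp
  have b: "w*p1 + (p2 - p1) \<le> w*p2" using wle[OF w o] .
  have "p1+(q1 + r1 - r2)+r2 = t \<and> w*p1 \<le> min a1 a2 \<and> w*p1+(q1 + r1 - r2) \<le> b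
     \<and> (q1 + r1 - r2)+r2 \<le> c \<and> r2 \<le> min d1 d2"
    using 1 2 False a b by simp
  then show ?thesis unfolding inU_def by blast
qed

lemma inU_meet:
  assumes "1 \<le> w" "inU w t a1 b c d1" "inU w t a2 b c d2"
  shows "inU w t (min a1 a2) b c (min d1 d2)"
proof -
  obtain p1 q1 r1 where 1: "p1+q1+r1 = t" "w*p1 \<le> a1" "w*p1+q1 \<le> b" "q1+r1 \<le> c" "r1 \<le> d1"
    using assms(2) unfolding inU_def by blast
  obtain p2 q2 r2 where 2: "p2+q2+r2 = t" "w*p2 \<le> a2" "w*p2+q2 \<le> b" "q2+r2 \<le> c" "r2 \<le> d2"
    using assms(3) unfolding inU_def by blast
  show ?thesis
  proof (cases "p1 \<le> p2")
    case True then show ?thesis using inU_meet_aux[OF assms(1) True 1 2] by simp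
  next
    case False
    then have "p2 \<le> p1" by simp
    from inU_meet_aux[OF assms(1) this 2 1] show ?thesis by (simp add: min.commute)
  qed
qed


section \<open>The nonzerodivisor\<close>

lemma lookup_mn_mult: "L (mn e * g) (e + k) = L g k"
  by (simp add: lookup_mult mn_def lookup_single when_mult)

lemma lookup_mn_mult0: "(\<And>k. m \<noteq> e + k) \<Longrightarrow> L (mn e * g) m = 0"
  by (simp add: lookup_mult mn_def lookup_single when_mult)


lemma in_UU: "m \<in> UU w t \<longleftrightarrow> inU w t (L m X1) (L m X2) (L m X3) (L m X4)"
  by (simp add: UU_def)

lemma fin_max: assumes "finite S" "x0 \<in> S" shows "\<exists>x\<in>S. \<forall>y\<in>S. (h::_\<Rightarrow>nat) y \<le> h x"
proof -
  have "Max (h ` S) \<in> h ` S" using assms by (intro Max_in) auto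
  then obtain x where x: "x \<in> S" "h x = Max (h ` S)" by auto
  have "\<forall>y\<in>S. h y \<le> h x" using assms x by (simp add: Max_ge)
  then show ?thesis using x by blast
qed

lemma core:
  fixes g :: "'k::comm_ring_1 poly4"
  assumes w: "1 \<le> w" and fg: "(Var X1 + Var X4) * g \<in> KK (UU w t)"
  shows "g \<in> KK (UU w t)"
proof (rule ccontr)
  define U where "U = UU w t"
  define fg where "fg = (Var X1 + Var X4) * g"
  have fgU: "Poly_Mapping.keys fg \<subseteq> U" using fg unfolding U_def fg_def KK_def by simp
  have fgsplit: "L fg m = L (mn (mk 1 0 0 0) * g) m + L (mn (mk 0 0 0 1) * g) m" for m
    unfolding fg_def Var_mk by (simp add: distrib_right lookup_add)
  assume "g \<notin> KK (UU w t)"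
  then obtain u0 where u0: "u0 \<in> Poly_Mapping.keys g" "u0 \<notin> U" unfolding KK_def U_def by blast
  define S where "S = {u \<in> Poly_Mapping.keys g. u \<notin> U \<and> L u X2 = L u0 X2 \<and> L u X3 = L u0 X3
                       \<and> L u X1 + L u X4 = L u0 X1 + L u0 X4}"
  have finS: "finite S" unfolding S_def by simp
  have u0S: "u0 \<in> S" unfolding S_def using u0 by simp
  obtain u where uS: "u \<in> S" and umax: "\<And>y. y \<in> S \<Longrightarrow> L y X1 \<le> L u X1"
    using fin_max[OF finS u0S, of "\<lambda>m. L m X1"] by blast
  obtain v where vS: "v \<in> S" and vmax: "\<And>y. y \<in> S \<Longrightarrow> L y X4 \<le> L v X4"
    using fin_max[OF finS u0S, of "\<lambda>m. L m X4"] by blast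
  have ug: "L g u \<noteq> 0" and vg: "L g v \<noteq> 0" using uS vS unfolding S_def by (auto simp: in_keys_iff)
  have A: "mk 1 0 0 0 + u \<in> U"
  proof -
    let ?x = "mk 1 0 0 0 + u"
    have c1: "L (mn (mk 1 0 0 0) * g) ?x = L g u" by (rule lookup_mn_mult)
    show ?thesis
    proof (cases "L u X4 = 0")
      case True
      have "\<And>k. ?x \<noteq> mk 0 0 0 1 + k"
      proof
        fix k assume "?x = mk 0 0 0 1 + k"
        then have "L ?x X4 = L (mk 0 0 0 1 + k) X4" by simp
        then show False using True by (simp add: lookup_add)
      qed
      then have "L (mn (mk 0 0 0 1) * g) ?x = 0" by (rule lookup_mn_mult0)
      then have "L fg ?x \<noteq> 0" using fgsplit c1 ug by simp
      then show ?thesis using fgU by (auto simp: in_keys_iff)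
    next
      case False
      define u2 where "u2 = mk (L u X1 + 1) (L u X2) (L u X3) (L u X4 - 1)"
      have x: "?x = mk 0 0 0 1 + u2"
        unfolding u2_def using False by (subst (1) mk_eq[of u]) (simp add: mk_add)
      have c4: "L (mn (mk 0 0 0 1) * g) ?x = L g u2" unfolding x by (rule lookup_mn_mult)
      show ?thesis
      proof (cases "L g u2 = 0")
        case True
        then have "L fg ?x \<noteq> 0" using fgsplit c1 c4 ug by simp
        then show ?thesis using fgU by (auto simp: in_keys_iff)
      next
        case nz: False
        have "u2 \<in> U"
        proof (rule ccontr)
          assume "u2 \<notin> U"
          then have "u2 \<in> S" using nz uS False unfolding S_def u2_def by (auto simp: in_keys_iff)
          then have "L u2 X1 \<le> L u X1" by (rule umax)
          then show False unfolding u2_def by simp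
        qed
        then show ?thesis unfolding x U_def in_UU
          by (rule inU_mono) (simp_all add: lookup_add)
      qed
    qed
  qed
  have B: "mk 0 0 0 1 + v \<in> U"
  proof -
    let ?x = "mk 0 0 0 1 + v"
    have c4: "L (mn (mk 0 0 0 1) * g) ?x = L g v" by (rule lookup_mn_mult)
    show ?thesis
    proof (cases "L v X1 = 0")
      case True
      have "\<And>k. ?x \<noteq> mk 1 0 0 0 + k"
      proof
        fix k assume "?x = mk 1 0 0 0 + k"
        then have "L ?x X1 = L (mk 1 0 0 0 + k) X1" by simp
        then show False using True by (simp add: lookup_add)
      qed
      then have "L (mn (mk 1 0 0 0) * g) ?x = 0" by (rule lookup_mn_mult0)
      then have "L fg ?x \<noteq> 0" using fgsplit c4 vg by simp
      then show ?thesis using fgU by (auto simp: in_keys_iff)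
    next
      case False
      define v2 where "v2 = mk (L v X1 - 1) (L v X2) (L v X3) (L v X4 + 1)"
      have x: "?x = mk 1 0 0 0 + v2"
        unfolding v2_def using False by (subst (1) mk_eq[of v]) (simp add: mk_add)
      have c1: "L (mn (mk 1 0 0 0) * g) ?x = L g v2" unfolding x by (rule lookup_mn_mult)
      show ?thesis
      proof (cases "L g v2 = 0")
        case True
        then have "L fg ?x \<noteq> 0" using fgsplit c1 c4 vg by simp
        then show ?thesis using fgU by (auto simp: in_keys_iff)
      next
        case nz: False
        have "v2 \<in> U"
        proof (rule ccontr)
          assume "v2 \<notin> U"
          then have "v2 \<in> S" using nz vS False unfolding S_def v2_def by (auto simp: in_keys_iff)
          then have "L v2 X4 \<le> L v X4" by (rule vmax)
          then show False unfolding v2_def by simp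
        qed
        then show ?thesis unfolding x U_def in_UU
          by (rule inU_mono) (simp_all add: lookup_add)
      qed
    qed
  qed
  have Au: "inU w t (1 + L u X1) (L u0 X2) (L u0 X3) (L u X4)"
    using A uS unfolding U_def in_UU S_def by (simp add: lookup_add)
  have Bv: "inU w t (L v X1) (L u0 X2) (L u0 X3) (1 + L v X4)"
    using B vS unfolding U_def in_UU S_def by (simp add: lookup_add)
  have le1: "L v X1 \<le> L u X1" using vS by (rule umax)
  have sums: "L u X1 + L u X4 = L v X1 + L v X4" using uS vS unfolding S_def by simp
  have "inU w t (min (1 + L u X1) (L v X1)) (L u0 X2) (L u0 X3) (min (L u X4) (1 + L v X4))"
    by (rule inU_meet[OF w Au Bv])
  moreover have "min (1 + L u X1) (L v X1) = L v X1" using le1 by simp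
  moreover have "min (L u X4) (1 + L v X4) = L u X4" using le1 sums by simp
  ultimately have "inU w t (L v X1) (L u0 X2) (L u0 X3) (L u X4)" by simp
  then have "inU w t (L u X1) (L u X2) (L u X3) (L u X4)"
    using le1 uS unfolding S_def by (auto elim: inU_mono)
  then have "u \<in> U" unfolding U_def in_UU .
  then show False using uS unfolding S_def by simp
qed


lemma upcl_UU: "upcl (UU w t)"
  using upcl_up[of "Ep w t"] by (simp add: up_Ep)

lemma upcl_nz: "upcl (- {0 :: mon})"
  unfolding upcl_def
proof (intro ballI allI)
  fix m k :: mon assume "m \<in> - {0}"
  then have "m \<noteq> 0" by simp
  then obtain v where "L m v \<noteq> 0" by (metis lookup_zero poly_mapping_eqI)
  then have "L (m + k) v \<noteq> 0" by (simp add: lookup_add)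
  then show "m + k \<in> - {0}" by auto
qed

lemma mn_KK: "e \<in> U \<Longrightarrow> mn e \<in> KK U"
  unfolding KK_def mn_def by simp

theorem proposition4p13:
  fixes \<omega>\<^sub>1 t :: nat
  assumes "\<omega>\<^sub>1 \<ge> 2" and "t \<ge> 2"
  shows "1 \<le> depth_quot (ideal_pow
           (gen_ideal {(Var X1 * Var X2) ^ \<omega>\<^sub>1, Var X2 * Var X3, Var X3 * Var X4}
              :: 'k::field poly4 set) t)"
proof -
  define J where "J = (ideal_pow
           (gen_ideal {(Var X1 * Var X2) ^ \<omega>\<^sub>1, Var X2 * Var X3, Var X3 * Var X4}
              :: 'k::field poly4 set) t)"
  have J: "J = KK (UU \<omega>\<^sub>1 t)" unfolding J_def by (rule pow_KK)
  define f :: "'k poly4" where "f = Var X1 + Var X4"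
  have w: "1 \<le> \<omega>\<^sub>1" using assms by simp
  have r1: "set [f] \<subseteq> max_ideal"
    unfolding max_ideal_def f_def by (simp, rule gen_add; rule gen_base; simp)
  have r2: "\<forall>i < length [f]. \<forall>g. [f] ! i * g \<in> gen_ideal (J \<union> set (take i [f]))
                           \<longrightarrow> g \<in> gen_ideal (J \<union> set (take i [f]))"
  proof (intro allI impI)
    fix i g assume i: "i < length [f]" and h: "[f] ! i * g \<in> gen_ideal (J \<union> set (take i [f]))"
    from i have i0: "i = 0" by simp
    have gJ: "gen_ideal J = J" unfolding J by (rule gen_KK_self[OF upcl_UU])
    from h have "f * g \<in> KK (UU \<omega>\<^sub>1 t)" using gJ J i0 by simp
    then have "g \<in> KK (UU \<omega>\<^sub>1 t)" unfolding f_def by (rule core[OF w])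
    then show "g \<in> gen_ideal (J \<union> set (take i [f]))" using gJ J i0 by simp
  qed
  have r3: "gen_ideal (J \<union> set [f]) \<noteq> UNIV"
  proof
    have UU0: "UU \<omega>\<^sub>1 t \<subseteq> - {0}"
    proof
      fix m assume m: "m \<in> UU \<omega>\<^sub>1 t"
      show "m \<in> - {0}"
      proof
        assume "m \<in> {0}"
        then have "inU \<omega>\<^sub>1 t 0 0 0 0" using m by (simp add: in_UU)
        then show False using w assms(2) unfolding inU_def by auto
      qed
    qed
    have sub: "gen_ideal (J \<union> set [f]) \<subseteq> KK (- {0})"
    proof (rule gen_KK[OF upcl_nz])
      have "J \<subseteq> KK (- {0})" unfolding J KK_def using UU0 by auto
      moreover have "f \<in> KK (- {0})" unfolding f_def Var_mk
        by (rule KK_add; rule mn_KK) (auto simp: mk_eq_iff mk_zero[symmetric])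
      ultimately show "J \<union> set [f] \<subseteq> KK (- {0})" by simp
    qed
    assume "gen_ideal (J \<union> set [f]) = UNIV"
    then have "(1 :: 'k poly4) \<in> KK (- {0})" using sub by blast
    then show False unfolding KK_def by simp
  qed
  have "regular_seq J [f]" unfolding regular_seq_def using r1 r2 r3 by blast
  then have "enat (length [f]) \<le> depth_quot J"
    unfolding depth_quot_def by (intro Sup_upper) blast
  then show ?thesis unfolding J_def by (simp add: one_enat_def)
qed

end
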